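(* Let $X=\sum_{i=1}^n X_i$ be a sum of independent discrete random variables $X_i$ taking values in $[0,1]$, let $0<\varepsilon<1$ and write $L=\ln\varepsilon<0$. For real $\phi>-6L$ define $$\delta(\phi)=\frac{-3L+\sqrt{L^2-8\phi L}}{2(\phi+L)}.$$ Then for every $\phi>-6L$, $\delta(\phi)\in(0,1)$ and $\delta(\phi)$ is the unique positive solution $\delta$ of $$\exp\!\Big(-\frac{\delta^2}{2+\delta}\cdot\frac{\phi}{1+\delta}\Big)=\varepsilon .$$ Moreover, $$\Pr\Big(X>-6L \ \text{ and }\ \frac{X}{1+\delta(X)}\ge \mathbb{E}[X]\Big)\le\varepsilon, \qquad \Pr\Big(X>-6L \ \text{ and }\ \frac{X}{1-\delta(X)}\le \mathbb{E}[X]\Big)\le\varepsilon .$$ *)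

theory Defs
  imports "HOL-Probability.Probability"
begin

definition chernoff_delta :: "real \<Rightarrow> real \<Rightarrow> real" where
  "chernoff_delta eps phi =
     (let L = ln eps in (-3 * L + sqrt (L^2 - 8 * phi * L)) / (2 * (phi + L)))"

end

theory Submission
  imports Defs
begin

lemma ln_lower:
  fixes x :: real assumes "0 \<le> x" shows "2*x/(2+x) \<le> ln (1+x)"
proof -
  let ?f = "\<lambda>x::real. ln (1+x) - 2*x/(2+x)"
  have "?f 0 \<le> ?f x"
  proof (rule DERIV_nonneg_imp_nondecreasing[OF assms])
    fix t :: real assume t: "0 \<le> t" "t \<le> x"
    have "DERIV ?f t :> (1/(1+t) - 4/(2+t)^2)"
      apply (insert t) apply (rule derivative_eq_intros refl | simp)+
      apply (simp add: field_simps power2_eq_square)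
      done
    moreover have "1/(1+t) - 4/(2+t)^2 \<ge> 0"
    proof -
      have a: "1+t \<noteq> 0" "(2+t)^2 \<noteq> 0" using t by auto
      have "1/(1+t) - 4/(2+t)^2 = t^2/((1+t)*(2+t)^2)" using a by (simp add: field_simps) (simp add: power2_eq_square algebra_simps)
      also have "\<dots> \<ge> 0" using t by simp
      finally show ?thesis .
    qed
    ultimately show "\<exists>y. DERIV ?f t :> y \<and> 0 \<le> y" by blast
  qed
  thus ?thesis by simp
qed

lemma ln_upper:
  fixes y :: real assumes "1 \<le> y" shows "ln y \<le> (y - 1/y)/2"
proof -
  let ?f = "\<lambda>y::real. (y - 1/y)/2 - ln y"
  have "?f 1 \<le> ?f y"
  proof (rule DERIV_nonneg_imp_nondecreasing[OF assms])
    fix t :: real assume t: "1 \<le> t" "t \<le> y"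
    have "DERIV ?f t :> ((1 + 1/t^2)/2 - 1/t)"
      using t by (auto intro!: derivative_eq_intros simp: field_simps power2_eq_square)
    moreover have "(1 + 1/t^2)/2 - 1/t \<ge> 0"
    proof -
      have "(1 + 1/t^2)/2 - 1/t = (t-1)^2/(2*t^2)" using t by (simp add: field_simps power2_eq_square)
      also have "\<dots> \<ge> 0" by simp
      finally show ?thesis .
    qed
    ultimately show "\<exists>y. DERIV ?f t :> y \<and> 0 \<le> y" by blast
  qed
  thus ?thesis by simp
qed

lemma delta_props:
  fixes eps phi :: real
  assumes e: "0 < eps" "eps < 1" and p: "phi > - 6 * ln eps"
  shows "chernoff_delta eps phi \<in> {0<..<1}"
    and "\<forall>d>0. exp (- (d^2 / (2 + d)) * (phi / (1 + d))) = eps \<longleftrightarrow> d = chernoff_delta eps phi"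
proof -
  define L where "L = ln eps"
  have L: "L < 0" using e by (simp add: L_def)
  define a where "a = phi + L"
  have a: "a > 0" using L p by (simp add: a_def L_def)
  define s where "s = sqrt (L^2 - 8*phi*L)"
  have phi0: "phi > 0" using L p by (simp add: L_def)
  have pl: "phi*L < 0" using phi0 L by (simp add: mult_pos_neg)
  have Dpos: "L^2 - 8*phi*L > 0"
  proof -
    have "0 \<le> L^2" by simp
    moreover have "8*phi*L = 8*(phi*L)" by simp
    ultimately show ?thesis using pl by linarith
  qed
  have s0: "s > 0" using Dpos by (simp add: s_def)
  have s2: "s^2 = L^2 - 8*phi*L" using Dpos by (simp add: s_def)
  hence s2': "s * s = L*L - 8*phi*L" by (simp add: power2_eq_square)
  define \<delta> where "\<delta> = (-3*L + s)/(2*a)"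
  have dd: "chernoff_delta eps phi = \<delta>"
    by (simp add: chernoff_delta_def \<delta>_def Let_def L_def a_def s_def)
  have d0: "\<delta> > 0" using L s0 a by (simp add: \<delta>_def)
  have "s < 2*phi + 5*L"
  proof -
    have pos: "2*phi + 5*L > 0" using p L by (simp add: L_def)
    have "s^2 < (2*phi + 5*L)^2"
    proof -
      have "(2*phi + 5*L)^2 - s^2 = 4*((phi+L)*(phi+6*L))"
        by (simp add: s2' power2_eq_square algebra_simps)
      moreover have "(phi+L)*(phi+6*L) > 0" using a p by (simp add: a_def L_def)
      ultimately show ?thesis by linarith
    qed
    thus ?thesis using pos s0 by (meson power_less_imp_less_base less_imp_le)
  qed
  hence d1: "\<delta> < 1" using a by (simp add: \<delta>_def a_def field_simps)
  show "chernoff_delta eps phi \<in> {0<..<1}" using dd d0 d1 by simp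
  define \<delta>2 where "\<delta>2 = (-3*L - s)/(2*a)"
  have d2: "\<delta>2 < 0"
  proof -
    have "s > -3*L"
    proof -
      have "s^2 - (-3*L)^2 = 8*((-L)*(phi + L))" by (simp add: s2' power2_eq_square algebra_simps)
      moreover have "(-L)*(phi + L) > 0" using L a by (simp add: a_def mult_neg_pos)
      ultimately have "s^2 > (-3*L)^2" by linarith
      thus ?thesis using s0 by (meson power_less_imp_less_base less_imp_le)
    qed
    thus ?thesis using a by (simp add: \<delta>2_def divide_neg_pos)
  qed
  have fact: "a*d^2 + 3*L*d + 2*L = a*(d-\<delta>)*(d-\<delta>2)" for d
  proof -
    have "a*(d-\<delta>)*(d-\<delta>2) = a*d^2 - a*(\<delta>+\<delta>2)*d + a*\<delta>*\<delta>2" by (simp add: algebra_simps power2_eq_square)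
    also have "a*(\<delta>+\<delta>2) = -3*L" using a by (simp add: \<delta>_def \<delta>2_def field_simps)
    also have "a*\<delta>*\<delta>2 = (9*L^2 - s^2)/(4*a)" using a by (simp add: \<delta>_def \<delta>2_def field_simps power2_eq_square)
    also have "(9*L^2 - s^2)/(4*a) = 2*L" using a by (simp add: s2' a_def field_simps power2_eq_square)
    finally show ?thesis by simp
  qed
  show "\<forall>d>0. exp (- (d^2 / (2 + d)) * (phi / (1 + d))) = eps \<longleftrightarrow> d = chernoff_delta eps phi"
  proof (intro allI impI)
    fix d :: real assume d: "d > 0"
    have "exp (- (d^2 / (2 + d)) * (phi / (1 + d))) = eps \<longleftrightarrow> - (d^2 / (2 + d)) * (phi / (1 + d)) = L"
      using e by (auto simp: L_def)
    also have "\<dots> \<longleftrightarrow> -(d^2*phi) = L*((2+d)*(1+d))"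
    proof -
      have "- (d^2 / (2 + d)) * (phi / (1 + d)) = -(d^2*phi)/((2+d)*(1+d))" by simp
      moreover have c: "(2+d)*(1+d) \<noteq> 0" using d by (simp add: add_pos_pos)
      moreover have "-(x/c) = L \<longleftrightarrow> -x = L*c" if "c \<noteq> 0" for x c :: real
        using that by (auto simp: field_simps)
      ultimately show ?thesis by simp
    qed
    also have "\<dots> \<longleftrightarrow> a*d^2 + 3*L*d + 2*L = 0"
    proof -
      have "L*((2+d)*(1+d)) + d^2*phi = a*d^2+3*L*d+2*L" by (simp add: a_def algebra_simps power2_eq_square)
      thus ?thesis by linarith
    qed
    also have "\<dots> \<longleftrightarrow> d = \<delta>" using fact[of d] a d d2 by auto
    finally show "exp (- (d^2 / (2 + d)) * (phi / (1 + d))) = eps \<longleftrightarrow> d = chernoff_delta eps phi"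
      using dd by simp
  qed
qed


lemma up_ineq:
  fixes d phi mu L :: real
  assumes "0 < d" "d < 1" "phi > 0" "mu \<le> phi/(1+d)" "-(d^2/(2+d))*(phi/(1+d)) = L"
  shows "-ln(1+d)*phi + ((1+d) - 1)*mu \<le> L"
proof -
  have h1: "d*mu \<le> d*(phi/(1+d))" using mult_left_mono[OF assms(4), of d] assms(1) by simp
  have l: "2*d/(2+d) \<le> ln(1+d)" using ln_lower[of d] assms by simp
  have h2: "2*d/(2+d)*phi \<le> ln(1+d)*phi" using mult_right_mono[OF l, of phi] assms(3) by linarith
  have a: "2+d \<noteq> 0" "1+d \<noteq> 0" using assms by auto
  have h3: "-(2*d/(2+d)*phi) + d*(phi/(1+d)) = -(d^2/(2+d))*(phi/(1+d))"
    using a by (simp add: field_simps) (simp add: power2_eq_square algebra_simps)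
  show ?thesis using h1 h2 h3 assms(5) by simp
qed

lemma lo_ineq:
  fixes d phi mu L :: real
  assumes "0 < d" "d < 1" "phi > 0" "phi/(1-d) \<le> mu" "-(d^2/(2+d))*(phi/(1+d)) = L"
  shows "-ln(1-d)*phi + ((1-d) - 1)*mu \<le> L"
proof -
  have h1: "d*(phi/(1-d)) \<le> d*mu" using mult_left_mono[OF assms(4), of d] assms(1) by simp
  have y1: "1 \<le> 1/(1-d)" using assms by simp
  have "ln (1/(1-d)) = -ln(1-d)" using assms by (simp add: ln_div)
  hence l: "-ln(1-d) \<le> (1/(1-d) - (1-d))/2" using ln_upper[OF y1] by simp
  have h2: "-ln(1-d)*phi \<le> ((1/(1-d) - (1-d))/2)*phi"
    using mult_right_mono[OF l, of phi] assms(3) by linarith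
  have a: "1-d \<noteq> 0" using assms by auto
  have gen: "((1/u - u)/2)*phi - (1-u)*(phi/u) = -(((1-u)^2*phi)/(2*u))" if "u \<noteq> 0" for u :: real
    using that by (simp add: field_simps) (simp add: power2_eq_square algebra_simps)
  have h3: "((1/(1-d) - (1-d))/2)*phi - d*(phi/(1-d)) = -((d^2*phi)/(2*(1-d)))"
    using gen[OF a] by simp
  have h4: "(d^2*phi)/((2+d)*(1+d)) \<le> (d^2*phi)/(2*(1-d))"
    by (rule frac_le) (use assms in \<open>auto simp: algebra_simps\<close>)
  have h5: "(d^2/(2+d))*(phi/(1+d)) = (d^2*phi)/((2+d)*(1+d))" by simp
  have h6: "((1-d) - 1)*mu = -(d*mu)" by (simp add: algebra_simps)
  have h7: "-(d^2/(2+d))*(phi/(1+d)) = -((d^2*phi)/((2+d)*(1+d)))" by simp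
  show ?thesis using h1 h2 h3 h4 h6 h7 assms(5) by linarith
qed

lemma exp_lin_bound:
  fixes s y :: real assumes "0 \<le> y" "y \<le> 1" shows "exp (s*y) \<le> 1 + y*(exp s - 1)"
proof -
  have "exp ((1-y) *\<^sub>R 0 + y *\<^sub>R s) \<le> (1-y) * exp 0 + y * exp s"
    using convex_onD[OF exp_convex, of y 0 s] assms by simp
  thus ?thesis by (simp add: algebra_simps)
qed

context prob_space
begin

lemma mgf_single:
  assumes [measurable]: "Y \<in> borel_measurable M" and r: "\<And>\<omega>. \<omega> \<in> space M \<Longrightarrow> Y \<omega> \<in> {0..1}"
  shows "(\<integral>\<^sup>+\<omega>. ennreal (exp (s * Y \<omega>)) \<partial>M) \<le> ennreal (exp ((exp s - 1) * expectation Y))"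
proof -
  have intY: "integrable M Y"
    by (rule integrable_const_bound[where B=1]) (use r in auto)
  have "(\<integral>\<^sup>+\<omega>. ennreal (exp (s * Y \<omega>)) \<partial>M) \<le> (\<integral>\<^sup>+\<omega>. ennreal (1 + Y \<omega> * (exp s - 1)) \<partial>M)"
    by (intro nn_integral_mono ennreal_leI exp_lin_bound) (use r in auto)
  also have "\<dots> = ennreal (\<integral>\<omega>. 1 + Y \<omega> * (exp s - 1) \<partial>M)"
  proof (rule nn_integral_eq_integral)
    show "integrable M (\<lambda>\<omega>. 1 + Y \<omega> * (exp s - 1))" using intY by auto
    show "AE \<omega> in M. 0 \<le> 1 + Y \<omega> * (exp s - 1)"
    proof (rule AE_I2)
      fix \<omega> assume "\<omega> \<in> space M"
      hence "exp (s * Y \<omega>) \<le> 1 + Y \<omega> * (exp s - 1)" using r exp_lin_bound by auto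
      moreover have "0 < exp (s * Y \<omega>)" by simp
      ultimately show "0 \<le> 1 + Y \<omega> * (exp s - 1)" by linarith
    qed
  qed
  also have "(\<integral>\<omega>. 1 + Y \<omega> * (exp s - 1) \<partial>M) = 1 + expectation Y * (exp s - 1)"
    using intY by (simp add: prob_space)
  also have "ennreal (1 + expectation Y * (exp s - 1)) \<le> ennreal (exp ((exp s - 1) * expectation Y))"
    using exp_ge_add_one_self[of "(exp s - 1) * expectation Y"] by (intro ennreal_leI) (simp add: mult.commute)
  finally show ?thesis .
qed

lemma mgf_sum:
  assumes fin: "finite I" and ind: "indep_vars (\<lambda>_. borel) X I"
    and rv: "\<And>i. i \<in> I \<Longrightarrow> X i \<in> borel_measurable M"
    and r: "\<And>i \<omega>. i \<in> I \<Longrightarrow> \<omega> \<in> space M \<Longrightarrow> X i \<omega> \<in> {0..1}"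
  shows "(\<integral>\<^sup>+\<omega>. ennreal (exp (s * (\<Sum>i\<in>I. X i \<omega>))) \<partial>M)
          \<le> ennreal (exp ((exp s - 1) * (\<Sum>i\<in>I. expectation (X i))))"
proof -
  have "(\<integral>\<^sup>+\<omega>. ennreal (exp (s * (\<Sum>i\<in>I. X i \<omega>))) \<partial>M) = (\<integral>\<^sup>+\<omega>. (\<Prod>i\<in>I. ennreal (exp (s * X i \<omega>))) \<partial>M)"
    by (intro nn_integral_cong) (simp add: sum_distrib_left exp_sum fin prod_ennreal)
  also have "\<dots> = (\<Prod>i\<in>I. \<integral>\<^sup>+\<omega>. ennreal (exp (s * X i \<omega>)) \<partial>M)"
    by (intro indep_vars_nn_integral fin indep_vars_compose2[OF ind]) auto
  also have "\<dots> \<le> (\<Prod>i\<in>I. ennreal (exp ((exp s - 1) * expectation (X i))))"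
    by (intro prod_mono_ennreal mgf_single rv r) auto
  also have "\<dots> = ennreal (exp ((exp s - 1) * (\<Sum>i\<in>I. expectation (X i))))"
    by (simp add: prod_ennreal exp_sum fin sum_distrib_left)
  finally show ?thesis .
qed

lemma chernoff_upper:
  assumes fin: "finite I" and ind: "indep_vars (\<lambda>_. borel) X I"
    and rv: "\<And>i. i \<in> I \<Longrightarrow> X i \<in> borel_measurable M"
    and r: "\<And>i \<omega>. i \<in> I \<Longrightarrow> \<omega> \<in> space M \<Longrightarrow> X i \<omega> \<in> {0..1}"
    and s: "s > 0"
  shows "prob {\<omega>\<in>space M. (\<Sum>i\<in>I. X i \<omega>) \<ge> a}
          \<le> exp (-s*a + (exp s - 1) * (\<Sum>i\<in>I. expectation (X i)))"
proof -
  have [measurable]: "(\<lambda>\<omega>. \<Sum>i\<in>I. X i \<omega>) \<in> borel_measurable M" using rv by auto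
  have "ennreal (prob {\<omega>\<in>space M. (\<Sum>i\<in>I. X i \<omega>) \<ge> a}) = emeasure M {\<omega>\<in>space M. (\<Sum>i\<in>I. X i \<omega>) \<ge> a}"
    by (simp add: emeasure_eq_measure)
  also have "\<dots> \<le> ennreal (exp (-s*a)) * (\<integral>\<^sup>+\<omega>. ennreal (exp (s * (\<Sum>i\<in>I. X i \<omega>))) * indicator (space M) \<omega> \<partial>M)"
    by (intro Chernoff_ineq_nn_integral_ge s) auto
  also have "(\<integral>\<^sup>+\<omega>. ennreal (exp (s * (\<Sum>i\<in>I. X i \<omega>))) * indicator (space M) \<omega> \<partial>M)
      = (\<integral>\<^sup>+\<omega>. ennreal (exp (s * (\<Sum>i\<in>I. X i \<omega>))) \<partial>M)"
    by (intro nn_integral_cong) auto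
  also have "ennreal (exp (-s*a)) * \<dots> \<le> ennreal (exp (-s*a)) * ennreal (exp ((exp s - 1) * (\<Sum>i\<in>I. expectation (X i))))"
    by (intro mult_left_mono mgf_sum fin ind rv r) auto
  also have "\<dots> = ennreal (exp (-s*a) * exp ((exp s - 1) * (\<Sum>i\<in>I. expectation (X i))))"
    by (intro ennreal_mult[symmetric]) auto
  also have "exp (-s*a) * exp ((exp s - 1) * (\<Sum>i\<in>I. expectation (X i))) = exp (-s*a + (exp s - 1) * (\<Sum>i\<in>I. expectation (X i)))"
    by (simp add: mult_exp_exp algebra_simps)
  finally show ?thesis by (subst (asm) ennreal_le_iff) auto
qed

lemma chernoff_lower:
  assumes fin: "finite I" and ind: "indep_vars (\<lambda>_. borel) X I"
    and rv: "\<And>i. i \<in> I \<Longrightarrow> X i \<in> borel_measurable M"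
    and r: "\<And>i \<omega>. i \<in> I \<Longrightarrow> \<omega> \<in> space M \<Longrightarrow> X i \<omega> \<in> {0..1}"
    and s: "s > 0"
  shows "prob {\<omega>\<in>space M. (\<Sum>i\<in>I. X i \<omega>) \<le> a}
          \<le> exp (s*a + (exp (-s) - 1) * (\<Sum>i\<in>I. expectation (X i)))"
proof -
  have [measurable]: "(\<lambda>\<omega>. \<Sum>i\<in>I. X i \<omega>) \<in> borel_measurable M" using rv by auto
  have "ennreal (prob {\<omega>\<in>space M. (\<Sum>i\<in>I. X i \<omega>) \<le> a}) = emeasure M {\<omega>\<in>space M. (\<Sum>i\<in>I. X i \<omega>) \<le> a}"
    by (simp add: emeasure_eq_measure)
  also have "\<dots> \<le> ennreal (exp (s*a)) * (\<integral>\<^sup>+\<omega>. ennreal (exp (-s * (\<Sum>i\<in>I. X i \<omega>))) * indicator (space M) \<omega> \<partial>M)"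
    by (intro Chernoff_ineq_nn_integral_le s) auto
  also have "(\<integral>\<^sup>+\<omega>. ennreal (exp (-s * (\<Sum>i\<in>I. X i \<omega>))) * indicator (space M) \<omega> \<partial>M)
      = (\<integral>\<^sup>+\<omega>. ennreal (exp (-s * (\<Sum>i\<in>I. X i \<omega>))) \<partial>M)"
    by (intro nn_integral_cong) auto
  also have "ennreal (exp (s*a)) * \<dots> \<le> ennreal (exp (s*a)) * ennreal (exp ((exp (-s) - 1) * (\<Sum>i\<in>I. expectation (X i))))"
    by (intro mult_left_mono mgf_sum fin ind rv r) auto
  also have "\<dots> = ennreal (exp (s*a) * exp ((exp (-s) - 1) * (\<Sum>i\<in>I. expectation (X i))))"
    by (intro ennreal_mult[symmetric]) auto
  also have "exp (s*a) * exp ((exp (-s) - 1) * (\<Sum>i\<in>I. expectation (X i))) = exp (s*a + (exp (-s) - 1) * (\<Sum>i\<in>I. expectation (X i)))"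
    by (simp add: mult_exp_exp algebra_simps)
  finally show ?thesis by (subst (asm) ennreal_le_iff) auto
qed

lemma incseq_bound:
  assumes "\<And>k. B k \<in> events" "incseq B" "\<And>k. prob (B k) \<le> e"
  shows "prob (\<Union>k. B k) \<le> e"
proof -
  have "(\<lambda>k. prob (B k)) \<longlonglongrightarrow> prob (\<Union>k. B k)"
    using assms by (intro finite_Lim_measure_incseq) auto
  thus ?thesis using assms(3) by (intro LIMSEQ_le_const2) auto
qed

lemma tail_union:
  fixes Y :: "'a \<Rightarrow> real" and T :: "real set"
  assumes Y[measurable]: "Y \<in> borel_measurable M" and e: "0 \<le> e"
    and H: "\<And>phi. phi \<in> T \<Longrightarrow> prob {\<omega>\<in>space M. Y \<omega> \<ge> phi} \<le> e"
  shows "prob {\<omega>\<in>space M. Y \<omega> \<in> T} \<le> e"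
proof (cases "T = {}")
  case True thus ?thesis using e by simp
next
  case Tne: False
  show ?thesis
  proof (cases "bdd_below T")
    case False
    define B where "B k = {\<omega>\<in>space M. Y \<omega> \<ge> - real k}" for k
    have "prob (\<Union>k. B k) \<le> e"
    proof (rule incseq_bound)
      show "B k \<in> events" for k unfolding B_def by measurable
      show "incseq B" unfolding incseq_def B_def by auto
      show "prob (B k) \<le> e" for k
      proof -
        from False obtain phi where phi: "phi \<in> T" "phi < - real k"
          unfolding bdd_below_def by (meson not_le)
        then have "B k \<subseteq> {\<omega>\<in>space M. Y \<omega> \<ge> phi}" by (auto simp: B_def)
        hence "prob (B k) \<le> prob {\<omega>\<in>space M. Y \<omega> \<ge> phi}" by (intro finite_measure_mono) measurable
        with H[OF phi(1)] show ?thesis by linarith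
      qed
    qed
    moreover have "(\<Union>k. B k) = space M"
    proof (auto simp: B_def)
      fix \<omega> assume "\<omega> \<in> space M"
      obtain k where "- Y \<omega> \<le> real k" using real_arch_simple by blast
      thus "\<exists>k. - real k \<le> Y \<omega>" by (intro exI[of _ k]) linarith
    qed
    moreover have "prob {\<omega>\<in>space M. Y \<omega> \<in> T} \<le> prob (space M)"
      by (intro finite_measure_mono) auto
    ultimately show ?thesis by simp
  next
    case bdd: True
    define c where "c = Inf T"
    have cle: "c \<le> phi" if "phi \<in> T" for phi unfolding c_def using cInf_lower bdd that by blast
    show ?thesis
    proof (cases "c \<in> T")
      case True
      have "prob {\<omega>\<in>space M. Y \<omega> \<in> T} \<le> prob {\<omega>\<in>space M. Y \<omega> \<ge> c}"
        using cle by (intro finite_measure_mono) auto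
      with H[OF True] show ?thesis by linarith
    next
      case False
      define B where "B k = {\<omega>\<in>space M. Y \<omega> \<ge> c + 1 / real (Suc k)}" for k
      have "prob (\<Union>k. B k) \<le> e"
      proof (rule incseq_bound)
        show "B k \<in> events" for k unfolding B_def by measurable
        show "incseq B" unfolding incseq_def B_def
        proof (intro allI impI subsetI)
          fix m n :: nat and \<omega> assume mn: "m \<le> n" and \<omega>: "\<omega> \<in> {\<omega> \<in> space M. c + 1 / real (Suc m) \<le> Y \<omega>}"
          have "1 / real (Suc n) \<le> 1 / real (Suc m)" using mn by (simp add: frac_le)
          thus "\<omega> \<in> {\<omega> \<in> space M. c + 1 / real (Suc n) \<le> Y \<omega>}" using \<omega> by auto
        qed
        show "prob (B k) \<le> e" for k
        proof -
          have "Inf T < c + 1 / real (Suc k)" unfolding c_def by simp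
          from cInf_lessD[OF Tne this] obtain phi where phi: "phi \<in> T" "phi < c + 1 / real (Suc k)" by blast
          then have "B k \<subseteq> {\<omega>\<in>space M. Y \<omega> \<ge> phi}" by (auto simp: B_def)
          hence "prob (B k) \<le> prob {\<omega>\<in>space M. Y \<omega> \<ge> phi}" by (intro finite_measure_mono) measurable
          with H[OF phi(1)] show ?thesis by linarith
        qed
      qed
      moreover have "{\<omega>\<in>space M. Y \<omega> \<in> T} \<subseteq> (\<Union>k. B k)"
      proof
        fix \<omega> assume \<omega>: "\<omega> \<in> {\<omega>\<in>space M. Y \<omega> \<in> T}"
        hence "c < Y \<omega>" using cle False by (metis (mono_tags, lifting) mem_Collect_eq order_le_less)
        hence "Y \<omega> - c > 0" by simp
        then obtain k where "inverse (real (Suc k)) < Y \<omega> - c" using reals_Archimedean by blast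
        thus "\<omega> \<in> (\<Union>k. B k)" using \<omega> by (auto simp: B_def inverse_eq_divide intro!: exI[of _ k])
      qed
      hence "prob {\<omega>\<in>space M. Y \<omega> \<in> T} \<le> prob (\<Union>k. B k)"
        by (intro finite_measure_mono) (auto simp: B_def)
      ultimately show ?thesis by linarith
    qed
  qed
qed

lemma tail_union_le:
  fixes Y :: "'a \<Rightarrow> real" and T :: "real set"
  assumes Y[measurable]: "Y \<in> borel_measurable M" and e: "0 \<le> e"
    and H: "\<And>phi. phi \<in> T \<Longrightarrow> prob {\<omega>\<in>space M. Y \<omega> \<le> phi} \<le> e"
  shows "prob {\<omega>\<in>space M. Y \<omega> \<in> T} \<le> e"
proof -
  have "prob {\<omega>\<in>space M. - Y \<omega> \<in> uminus ` T} \<le> e"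
  proof (rule tail_union)
    show "(\<lambda>\<omega>. - Y \<omega>) \<in> borel_measurable M" by measurable
    show "0 \<le> e" by fact
    fix psi assume "psi \<in> uminus ` T"
    then obtain phi where phi: "phi \<in> T" "psi = - phi" by auto
    have "{\<omega>\<in>space M. - Y \<omega> \<ge> psi} = {\<omega>\<in>space M. Y \<omega> \<le> phi}" using phi by auto
    thus "prob {\<omega>\<in>space M. - Y \<omega> \<ge> psi} \<le> e" using H[OF phi(1)] by simp
  qed
  moreover have "{\<omega>\<in>space M. - Y \<omega> \<in> uminus ` T} = {\<omega>\<in>space M. Y \<omega> \<in> T}" by auto
  ultimately show ?thesis by simp
qed

end

theorem lemma3:
  fixes M :: "'a measure" and X :: "nat \<Rightarrow> 'a \<Rightarrow> real" and n :: nat and eps :: real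
  assumes "prob_space M"
    and rv: "\<And>i. i \<in> {1..n} \<Longrightarrow> X i \<in> borel_measurable M"
    and indep: "prob_space.indep_vars M (\<lambda>_. borel) X {1..n}"
    and discrete: "\<And>i. i \<in> {1..n} \<Longrightarrow> countable (X i ` space M)"
    and range01: "\<And>i \<omega>. i \<in> {1..n} \<Longrightarrow> \<omega> \<in> space M \<Longrightarrow> X i \<omega> \<in> {0..1}"
    and eps: "0 < eps" "eps < 1"
  shows "(\<forall>phi. phi > - 6 * ln eps \<longrightarrow>
            chernoff_delta eps phi \<in> {0<..<1} \<and>
            (\<forall>d>0. exp (- (d^2 / (2 + d)) * (phi / (1 + d))) = eps
                     \<longleftrightarrow> d = chernoff_delta eps phi))
      \<and> prob_space.prob M {\<omega> \<in> space M.
            (\<Sum>i=1..n. X i \<omega>) > - 6 * ln eps \<and>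
            (\<Sum>i=1..n. X i \<omega>) / (1 + chernoff_delta eps (\<Sum>i=1..n. X i \<omega>))
              \<ge> prob_space.expectation M (\<lambda>\<omega>. \<Sum>i=1..n. X i \<omega>)} \<le> eps
      \<and> prob_space.prob M {\<omega> \<in> space M.
            (\<Sum>i=1..n. X i \<omega>) > - 6 * ln eps \<and>
            (\<Sum>i=1..n. X i \<omega>) / (1 - chernoff_delta eps (\<Sum>i=1..n. X i \<omega>))
              \<le> prob_space.expectation M (\<lambda>\<omega>. \<Sum>i=1..n. X i \<omega>)} \<le> eps"
proof -
  interpret prob_space M by fact
  define S where "S = (\<lambda>\<omega>. \<Sum>i=1..n. X i \<omega>)"
  define \<mu> where "\<mu> = expectation S"
  have Smeas: "S \<in> borel_measurable M" using rv by (simp add: S_def)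
  have intX: "integrable M (X i)" if "i \<in> {1..n}" for i
    by (rule integrable_const_bound[where B=1]) (use range01[OF that] rv[OF that] in auto)
  have \<mu>eq: "\<mu> = (\<Sum>i\<in>{1..n}. expectation (X i))"
    unfolding \<mu>_def S_def by (rule Bochner_Integration.integral_sum) (use intX in auto)
  have part1: "\<forall>phi. phi > - 6 * ln eps \<longrightarrow>
            chernoff_delta eps phi \<in> {0<..<1} \<and>
            (\<forall>d>0. exp (- (d^2 / (2 + d)) * (phi / (1 + d))) = eps
                     \<longleftrightarrow> d = chernoff_delta eps phi)"
    using delta_props[OF eps] by blast
  have key: "chernoff_delta eps phi \<in> {0<..<1} \<and> phi > 0 \<and>
       -((chernoff_delta eps phi)^2/(2+chernoff_delta eps phi))*(phi/(1+chernoff_delta eps phi)) = ln eps"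
    if p: "phi > - 6 * ln eps" for phi
  proof -
    let ?d = "chernoff_delta eps phi"
    have d: "?d \<in> {0<..<1}" using delta_props(1)[OF eps p] .
    have "exp (- (?d^2 / (2 + ?d)) * (phi / (1 + ?d))) = eps"
      using delta_props(2)[OF eps p] d by auto
    hence "- (?d^2 / (2 + ?d)) * (phi / (1 + ?d)) = ln eps" by (metis ln_exp)
    moreover have "phi > 0" using p eps ln_less_zero[of eps] by linarith
    ultimately show ?thesis using d by blast
  qed
  have upper: "prob {\<omega>\<in>space M. S \<omega> > - 6 * ln eps \<and> S \<omega> / (1 + chernoff_delta eps (S \<omega>)) \<ge> \<mu>} \<le> eps"
  proof -
    define T where "T = {phi. phi > - 6 * ln eps \<and> phi / (1 + chernoff_delta eps phi) \<ge> \<mu>}"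
    have "prob {\<omega>\<in>space M. S \<omega> \<in> T} \<le> eps"
    proof (rule tail_union[OF Smeas])
      show "0 \<le> eps" using eps by simp
      fix phi assume "phi \<in> T"
      hence p: "phi > - 6 * ln eps" and m: "phi / (1 + chernoff_delta eps phi) \<ge> \<mu>" by (auto simp: T_def)
      define d where "d = chernoff_delta eps phi"
      have k: "d \<in> {0<..<1}" "phi > 0" "-(d^2/(2+d))*(phi/(1+d)) = ln eps"
        using key[OF p] unfolding d_def by auto
      have "prob {\<omega>\<in>space M. S \<omega> \<ge> phi} \<le> exp (-ln (1+d)*phi + (exp (ln (1+d)) - 1) * \<mu>)"
        unfolding S_def \<mu>eq
        by (rule chernoff_upper[OF _ indep rv range01]) (use k in auto)
      also have "exp (ln (1+d)) = 1 + d" using k by simp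
      also have "exp (-ln (1+d)*phi + ((1+d) - 1) * \<mu>) \<le> exp (ln eps)"
        using up_ineq[of d phi \<mu> "ln eps"] k m d_def by simp
      also have "exp (ln eps) = eps" using eps by simp
      finally show "prob {\<omega>\<in>space M. S \<omega> \<ge> phi} \<le> eps" .
    qed
    thus ?thesis by (simp add: T_def)
  qed
  have lower: "prob {\<omega>\<in>space M. S \<omega> > - 6 * ln eps \<and> S \<omega> / (1 - chernoff_delta eps (S \<omega>)) \<le> \<mu>} \<le> eps"
  proof -
    define T where "T = {phi. phi > - 6 * ln eps \<and> phi / (1 - chernoff_delta eps phi) \<le> \<mu>}"
    have "prob {\<omega>\<in>space M. S \<omega> \<in> T} \<le> eps"
    proof (rule tail_union_le[OF Smeas])
      show "0 \<le> eps" using eps by simp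
      fix phi assume "phi \<in> T"
      hence p: "phi > - 6 * ln eps" and m: "phi / (1 - chernoff_delta eps phi) \<le> \<mu>" by (auto simp: T_def)
      define d where "d = chernoff_delta eps phi"
      have k: "d \<in> {0<..<1}" "phi > 0" "-(d^2/(2+d))*(phi/(1+d)) = ln eps"
        using key[OF p] unfolding d_def by auto
      have "prob {\<omega>\<in>space M. S \<omega> \<le> phi} \<le> exp (-ln (1-d)*phi + (exp (-(-ln (1-d))) - 1) * \<mu>)"
        unfolding S_def \<mu>eq
        by (rule chernoff_lower[OF _ indep rv range01]) (use k in auto)
      also have "exp (-(-ln (1-d))) = 1 - d" using k by simp
      also have "exp (-ln (1-d)*phi + ((1-d) - 1) * \<mu>) \<le> exp (ln eps)"
        using lo_ineq[of d phi \<mu> "ln eps"] k m d_def by simp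
      also have "exp (ln eps) = eps" using eps by simp
      finally show "prob {\<omega>\<in>space M. S \<omega> \<le> phi} \<le> eps" .
    qed
    thus ?thesis by (simp add: T_def)
  qed
  show ?thesis using part1 upper lower by (simp only: S_def \<mu>_def)
qed

end
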